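(* Let $0<s<r<1$ and let $P$ be a compact packing of the plane by discs of radii $1$, $r$, $s$. Then the coding of the corona of every $s$-disc of $P$ is, up to cyclic rotation and reversal, either $\mathrm{ssssss}$ or one of the following $55$ words: rrrrr, rrrrs, rrrss, rrsrs, rrrr, rrsss, rsrss, rrrs, rrr, rrss, 11111, 1111s, 111ss, 11s1s, 1111, 11sss, 1s1ss, 111s, 111, 11ss, 1111r, 111rs, 11rss, 11srs, 111r, 1rsss, 1srss, 11rs, 11r, 1rss, 111rr, 11r1s, 1r1ss, 1rs1s, 11rr, 1r1s, 1rr, 11r1r, 11rrs, 1rrss, 1rsrs, 1r1r, 1rrs, 11rrr, 1r1rs, r1rss, rrs1s, 1rrr, r1rs, 1r1rr, 1rr1s, 1rrrr, 1rrrs, r11rs, r1rrs.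
   Context: A packing is a set of discs in the plane with pairwise disjoint interiors; it is compact if its contact graph (centers as vertices, edges between tangent discs) is a triangulation of the plane. For $x\in\{1,r,s\}$, an $x$-disc is a disc of radius $x$. The corona of a disc $D$ in a compact packing is the set of discs tangent to $D$; its coding is the cyclic word over the alphabet $\{1,r,s\}$ obtained by listing the radii of these discs in angular order around $D$ (consecutive letters correspond to tangent discs). Codings are considered up to cyclic rotation and reversal. *)

theory Defs
  imports "HOL-Analysis.Analysis"
begin

type_synonym disc = "complex \<times> real"

definition center :: "disc \<Rightarrow> complex" where "center D = fst D"
definition radius :: "disc \<Rightarrow> real" where "radius D = snd D"

definition packing :: "disc set \<Rightarrow> bool" where
  "packing P \<longleftrightarrow> (\<forall>D\<in>P. radius D > 0) \<and>
     (\<forall>D\<in>P. \<forall>E\<in>P. D \<noteq> E \<longrightarrow>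
        ball (center D) (radius D) \<inter> ball (center E) (radius E) = {})"

definition tangent :: "disc \<Rightarrow> disc \<Rightarrow> bool" where
  "tangent D E \<longleftrightarrow> D \<noteq> E \<and> dist (center D) (center E) = radius D + radius E"

definition contact_drawing :: "disc set \<Rightarrow> complex set" where
  "contact_drawing P = center ` P \<union>
     (\<Union>{closed_segment (center D) (center E) | D E. D \<in> P \<and> E \<in> P \<and> tangent D E})"

definition face_triangle :: "disc set \<Rightarrow> disc \<Rightarrow> disc \<Rightarrow> disc \<Rightarrow> bool" where
  "face_triangle P A B C \<longleftrightarrow> A \<in> P \<and> B \<in> P \<and> C \<in> P \<and>
     tangent A B \<and> tangent B C \<and> tangent A C \<and>
     interior (convex hull {center A, center B, center C}) \<inter> contact_drawing P = {}"

text \<open>Compact packing: the contact graph is a triangulation of the plane, i.e. the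
plane is covered by the closed triangular faces of the contact graph (equivalently,
every face of the planar straight-line drawing of the contact graph is a triangle).\<close>
definition compact_packing :: "disc set \<Rightarrow> bool" where
  "compact_packing P \<longleftrightarrow> packing P \<and>
     (\<forall>z::complex. \<exists>A B C. face_triangle P A B C \<and>
        z \<in> convex hull {center A, center B, center C})"

definition corona :: "disc set \<Rightarrow> disc \<Rightarrow> disc set" where
  "corona P D = {E \<in> P. tangent D E}"

definition corona_in_angular_order :: "disc set \<Rightarrow> disc \<Rightarrow> disc list \<Rightarrow> bool" where
  "corona_in_angular_order P D L \<longleftrightarrow> distinct L \<and> set L = corona P D \<and>
     sorted_wrt (\<lambda>E F. Arg (center E - center D) < Arg (center F - center D)) L"

definition coding :: "disc list \<Rightarrow> real list" where
  "coding L = map radius L"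

definition cyc_equiv :: "'a list \<Rightarrow> 'a list \<Rightarrow> bool" where
  "cyc_equiv u v \<longleftrightarrow> (\<exists>n. rotate n u = v \<or> rotate n (rev u) = v)"

definition letter :: "real \<Rightarrow> real \<Rightarrow> char \<Rightarrow> real" where
  "letter r s c = (if c = CHR ''1'' then 1 else if c = CHR ''r'' then r else s)"

definition word :: "real \<Rightarrow> real \<Rightarrow> string \<Rightarrow> real list" where
  "word r s w = map (letter r s) w"

definition s_corona_words :: "string list" where
  "s_corona_words = [''ssssss'',
    ''rrrrr'', ''rrrrs'', ''rrrss'', ''rrsrs'', ''rrrr'', ''rrsss'', ''rsrss'', ''rrrs'',
    ''rrr'', ''rrss'', ''11111'', ''1111s'', ''111ss'', ''11s1s'', ''1111'', ''11sss'',
    ''1s1ss'', ''111s'', ''111'', ''11ss'', ''1111r'', ''111rs'', ''11rss'', ''11srs'',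
    ''111r'', ''1rsss'', ''1srss'', ''11rs'', ''11r'', ''1rss'', ''111rr'', ''11r1s'',
    ''1r1ss'', ''1rs1s'', ''11rr'', ''1r1s'', ''1rr'', ''11r1r'', ''11rrs'', ''1rrss'',
    ''1rsrs'', ''1r1r'', ''1rrs'', ''11rrr'', ''1r1rs'', ''r1rss'', ''rrs1s'', ''1rrr'',
    ''r1rs'', ''1r1rr'', ''1rr1s'', ''1rrrr'', ''1rrrs'', ''r11rs'', ''r1rrs'']"

end

theory Submission
  imports Defs
begin


lemma sin_shift_int: "sin ((x::real) + 2*pi * of_int k) = sin x"
  by (simp add: sin_add mult.assoc[symmetric])

lemma per_eq:
  fixes x y :: real and k :: int
  assumes "-pi < x" "x \<le> pi" "-pi < y" "y \<le> pi" "x - y = 2*pi * of_int k"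
  shows "x = y"
proof -
  have "\<bar>2*pi * of_int k\<bar> < 2*pi" using assms by auto
  then have "\<bar>of_int k::real\<bar> < 1" by (simp add: abs_mult)
  then have "k = 0" by linarith
  then show ?thesis using assms by simp
qed

lemma sin_pos_range:
  fixes x :: real
  assumes "0 \<le> x" "x < 2*pi" "sin x > 0"
  shows "0 < x \<and> x < pi"
proof -
  have "x \<noteq> 0" using assms by auto
  moreover have "\<not> pi \<le> x" using sin_le_zero[of x] assms by linarith
  ultimately show ?thesis using assms by auto
qed

lemma gap_lemma:
  fixes K :: "'a set" and \<alpha> :: "'a \<Rightarrow> real" and T :: "'a \<Rightarrow> 'a \<Rightarrow> bool"
  assumes rng: "\<And>G. G \<in> K \<Longrightarrow> -pi < \<alpha> G \<and> \<alpha> G \<le> pi"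
    and inj: "inj_on \<alpha> K"
    and L: "set L = K" "sorted_wrt (\<lambda>E F. \<alpha> E < \<alpha> F) L"
    and GA: "\<And>\<phi>. (\<forall>G\<in>K. \<forall>k::int. \<alpha> G \<noteq> \<phi> + 2*pi * of_int k) \<Longrightarrow>
      \<exists>E\<in>K. \<exists>F\<in>K. T E F \<and> sin (\<alpha> F - \<alpha> E) > 0 \<and> sin (\<phi> - \<alpha> E) > 0 \<and> sin (\<alpha> F - \<phi>) > 0 \<and>
        (\<forall>G\<in>K. \<not> (sin (\<alpha> G - \<alpha> E) > 0 \<and> sin (\<alpha> F - \<alpha> G) > 0))"
    and i: "i < length L"
  defines "n \<equiv> length L"
  defines "g \<equiv> (if i + 1 < n then \<alpha> (L!(i+1)) - \<alpha> (L!i) else \<alpha> (L!0) + 2*pi - \<alpha> (L!i))"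
  shows "T (L!i) (L!((i+1) mod n)) \<and> 0 < g \<and> g < pi"
proof -
  define a where "a j = \<alpha> (L!j)" for j
  have mono: "a j < a l" if "j < l" "l < n" for j l
    using sorted_wrt_nth_less[OF L(2) that[unfolded n_def]] by (simp add: a_def)
  have mono': "a j \<le> a l" if "j \<le> l" "l < n" for j l
    using mono[of j l] that by (cases "j = l") auto
  have ar: "-pi < a j \<and> a j \<le> pi" if "j < n" for j
    using rng[of "L!j"] that L(1) unfolding a_def n_def by auto
  define lo where "lo = a i"
  define hi where "hi = lo + g"
  have i': "i < n" using i n_def by simp
  have ghi: "hi = (if i + 1 < n then a (i+1) else a 0 + 2*pi)"
    unfolding hi_def lo_def g_def a_def by auto
  have lohi: "lo < hi"
    using mono[of i "i+1"] ar[of 0] ar[of i] i' unfolding ghi lo_def by auto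
  have norep: "\<not> (lo < \<alpha> G + 2*pi * of_int k \<and> \<alpha> G + 2*pi * of_int k < hi)" if G: "G \<in> K" for G k
  proof
    assume H: "lo < \<alpha> G + 2*pi * of_int k \<and> \<alpha> G + 2*pi * of_int k < hi"
    obtain j where j: "j < n" "G = L!j" using G L(1) unfolding n_def by (metis in_set_conv_nth)
    have aj: "\<alpha> G = a j" using j a_def by simp
    have "k = 0 \<or> k \<ge> 1 \<or> k \<le> -1" by linarith
    moreover
    { assume "k = 0"
      then have "lo < a j" "a j < hi" using H aj by auto
      then have False
      proof (cases "i + 1 < n")
        case True
        then show ?thesis using \<open>lo < a j\<close> \<open>a j < hi\<close> mono'[of j i] mono'[of "i+1" j] j i'
          unfolding ghi lo_def by (cases "j \<le> i") auto
      next
        case False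
        then show ?thesis using \<open>lo < a j\<close> mono'[of j i] j i' unfolding lo_def by (cases "j \<le> i") auto
      qed }
    moreover
    { assume k: "k \<ge> 1"
      have "2*pi * of_int k \<ge> 2*pi*1" using k by (intro mult_left_mono) auto
      then have "\<alpha> G + 2*pi * of_int k \<ge> a j + 2*pi" using aj by simp
      moreover have "hi \<le> a j + 2 * pi"
      proof (cases "i + 1 < n")
        case True then show ?thesis using ar[of "i+1"] ar[of j] j unfolding ghi by auto
      next
        case False
        then show ?thesis using mono'[of 0 j] j ar[of j] ar[of 0] unfolding ghi by auto
      qed
      ultimately have False using H by linarith }
    moreover
    { assume k: "k \<le> -1"
      have "2*pi * of_int k \<le> 2*pi*(-1)" using k by (intro mult_left_mono) auto
      then have "\<alpha> G + 2*pi * of_int k \<le> a j - 2*pi" using aj by simp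
      moreover have "a j - 2 * pi \<le> lo" using ar[of j] ar[of i] j i' unfolding lo_def by auto
      ultimately have False using H by linarith }
    ultimately show False by blast
  qed
  define \<phi> where "\<phi> = (lo + hi) / 2"
  have phi: "lo < \<phi>" "\<phi> < hi" using lohi \<phi>_def by auto
  have "\<forall>G\<in>K. \<forall>k::int. \<alpha> G \<noteq> \<phi> + 2*pi * of_int k"
  proof (intro ballI allI notI)
    fix G k assume G: "G \<in> K" and e: "\<alpha> G = \<phi> + 2*pi * of_int k"
    have "\<alpha> G + 2*pi * of_int (-k) = \<phi>" using e by simp
    then show False using norep[OF G, of "-k"] phi by simp
  qed
  from GA[OF this] obtain E F where EF: "E \<in> K" "F \<in> K" "T E F" "sin (\<alpha> F - \<alpha> E) > 0"
    "sin (\<phi> - \<alpha> E) > 0" "sin (\<alpha> F - \<phi>) > 0"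
    and nocone: "\<forall>G\<in>K. \<not> (sin (\<alpha> G - \<alpha> E) > 0 \<and> sin (\<alpha> F - \<alpha> G) > 0)" by blast
  define kE where "kE = \<lfloor>(\<phi> - \<alpha> E)/(2*pi)\<rfloor>"
  define tE where "tE = \<alpha> E + 2*pi * of_int kE"
  define kF where "kF = - \<lfloor>(\<alpha> F - \<phi>)/(2*pi)\<rfloor>"
  define tF where "tF = \<alpha> F + 2*pi * of_int kF"
  have tE1: "0 \<le> \<phi> - tE" "\<phi> - tE < 2*pi"
  proof -
    have "of_int kE \<le> (\<phi> - \<alpha> E)/(2*pi)" "(\<phi> - \<alpha> E)/(2*pi) < of_int kE + 1"
      unfolding kE_def by linarith+
    then show "0 \<le> \<phi> - tE" "\<phi> - tE < 2*pi" unfolding tE_def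
      by (auto simp: field_simps)
  qed
  have tF1: "0 \<le> tF - \<phi>" "tF - \<phi> < 2*pi"
  proof -
    have "of_int (-kF) \<le> (\<alpha> F - \<phi>)/(2*pi)" "(\<alpha> F - \<phi>)/(2*pi) < of_int (-kF) + 1"
      unfolding kF_def by linarith+
    then show "0 \<le> tF - \<phi>" "tF - \<phi> < 2*pi" unfolding tF_def
      by (auto simp: field_simps)
  qed
  have sE: "sin (\<phi> - tE) > 0"
    using EF(5) sin_shift_int[of "\<phi> - \<alpha> E" "-kE"] unfolding tE_def by (simp add: algebra_simps)
  have sF: "sin (tF - \<phi>) > 0"
    using EF(6) sin_shift_int[of "\<alpha> F - \<phi>" "kF"] unfolding tF_def by (simp add: algebra_simps)
  have tE2: "0 < \<phi> - tE" "\<phi> - tE < pi" using sin_pos_range[OF tE1 sE] by auto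
  have tF2: "0 < tF - \<phi>" "tF - \<phi> < pi" using sin_pos_range[OF tF1 sF] by auto
  have tElo: "tE \<le> lo"
    using norep[OF EF(1), of kE] phi tE2 unfolding tE_def by auto
  have tFhi: "hi \<le> tF"
    using norep[OF EF(2), of kF] phi tF2 unfolding tF_def by auto
  have sEF: "sin (tF - tE) > 0"
    using EF(4) sin_shift_int[of "\<alpha> F - \<alpha> E" "kF - kE"] unfolding tE_def tF_def
    by (simp add: algebra_simps)
  have EFpi: "tF - tE < pi" using sin_pos_range[of "tF - tE"] sEF tE2 tF2 by auto
  have Li: "L!i \<in> K" using L(1) i by auto
  have Li1: "L!((i+1) mod n) \<in> K" proof -
    have "(i+1) mod n < length L" using i' unfolding n_def by (intro mod_less_divisor) auto
    then show ?thesis using L(1) nth_mem by blast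
  qed
  have aLi: "\<alpha> (L!i) = lo" unfolding lo_def a_def ..
  obtain m :: int where aLi1: "\<alpha> (L!((i+1) mod n)) = hi - 2*pi * of_int m"
  proof (cases "i + 1 < n")
    case True
    then show ?thesis using that[of 0] unfolding ghi a_def by auto
  next
    case False
    then have "(i+1) mod n = 0" using i' by (metis add_less_same_cancel2 mod_self not_less_eq le_neq_implies_less less_one Suc_eq_plus1 not_less)
    then show ?thesis using that[of 1] False unfolding ghi a_def by auto
  qed
  have eqE: "tE = lo"
  proof (rule ccontr)
    assume "tE \<noteq> lo"
    then have lt: "tE < lo" using tElo by auto
    have "sin (\<alpha> (L!i) - \<alpha> E) > 0"
    proof -
      have "sin (lo - tE) > 0" using lt tE2 phi by (intro sin_gt_zero) auto
      then show ?thesis using sin_shift_int[of "lo - \<alpha> E" "-kE"] aLi unfolding tE_def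
        by (simp add: algebra_simps)
    qed
    moreover have "sin (\<alpha> F - \<alpha> (L!i)) > 0"
    proof -
      have "sin (tF - lo) > 0" using lt tFhi lohi EFpi by (intro sin_gt_zero) auto
      then show ?thesis using sin_shift_int[of "\<alpha> F - lo" "kF"] aLi unfolding tF_def
        by (simp add: algebra_simps)
    qed
    ultimately show False using nocone Li by blast
  qed
  have eqF: "tF = hi"
  proof (rule ccontr)
    assume "tF \<noteq> hi"
    then have lt: "hi < tF" using tFhi by auto
    let ?G = "L!((i+1) mod n)"
    have "sin (\<alpha> ?G - \<alpha> E) > 0"
    proof -
      have "sin (hi - tE) > 0" using lt tElo lohi EFpi by (intro sin_gt_zero) auto
      moreover have "\<alpha> ?G - \<alpha> E = (hi - tE) + 2*pi * of_int (kE - m)"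
        using aLi1 unfolding tE_def by (simp add: algebra_simps)
      ultimately show ?thesis using sin_shift_int[of "hi - tE" "kE - m"] by simp
    qed
    moreover have "sin (\<alpha> F - \<alpha> ?G) > 0"
    proof -
      have "sin (tF - hi) > 0" using lt tF2 phi by (intro sin_gt_zero) auto
      moreover have "\<alpha> F - \<alpha> ?G = (tF - hi) + 2*pi * of_int (m - kF)"
        using aLi1 unfolding tF_def by (simp add: algebra_simps)
      ultimately show ?thesis using sin_shift_int[of "tF - hi" "m - kF"] by simp
    qed
    ultimately show False using nocone Li1 by blast
  qed
  have "\<alpha> E = \<alpha> (L!i)"
    using per_eq[of "\<alpha> (L!i)" "\<alpha> E" kE] rng[OF Li] rng[OF EF(1)] eqE aLi unfolding tE_def by auto
  then have E: "E = L!i" using inj_onD[OF inj _ EF(1) Li] by simp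
  have "\<alpha> F = \<alpha> (L!((i+1) mod n))"
  proof -
    have "\<alpha> (L!((i+1) mod n)) - \<alpha> F = 2*pi * of_int (kF - m)"
      using eqF aLi1 unfolding tF_def by (simp add: algebra_simps)
    then show ?thesis using per_eq[of "\<alpha> (L!((i+1) mod n))" "\<alpha> F" "kF - m"] rng[OF Li1] rng[OF EF(2)]
      by auto
  qed
  then have F: "F = L!((i+1) mod n)" using inj_onD[OF inj _ EF(2) Li1] by simp
  have "g = tF - tE" using eqE eqF hi_def by simp
  then show ?thesis using EF(3) E F lohi tE2 tF2 EFpi eqE eqF hi_def by auto
qed




definition cross :: "complex \<Rightarrow> complex \<Rightarrow> real" where
  "cross u v = Im (cnj u * v)"

lemma tangent_sym: "tangent D E \<longleftrightarrow> tangent E D"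
  unfolding tangent_def by (auto simp: dist_commute)

lemma seg_dist: "p \<in> closed_segment a b \<Longrightarrow> dist a p + dist p b = dist a (b::complex)"
  using between_mem_segment[of a b p] between[of a b p] by simp

lemma sep:
  assumes "packing P" "D \<in> P" "E \<in> P" "D \<noteq> E"
  shows "radius D + radius E \<le> dist (center D) (center E)"
proof (rule ccontr)
  assume H: "\<not> ?thesis"
  define a where "a = center D" define b where "b = center E"
  define rD where "rD = radius D" define rE where "rE = radius E"
  have pos: "rD > 0" "rE > 0" using assms unfolding packing_def rD_def rE_def by auto
  define p where "p = a + (rD/(rD+rE)) *\<^sub>R (b - a)"
  have "dist a p = rD/(rD+rE) * dist a b" unfolding p_def dist_norm using pos
    by (simp add: norm_minus_commute)
  also have "\<dots> < rD/(rD+rE) * (rD + rE)"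
    using H pos unfolding a_def b_def rD_def rE_def by (intro mult_strict_left_mono) auto
  finally have p1: "p \<in> ball a rD" using pos by (simp add: mem_ball)
  have "p - b = (rE/(rD+rE)) *\<^sub>R (a - b)"
  proof -
    have "p - b = (1 - rD/(rD+rE)) *\<^sub>R (a - b)" unfolding p_def by (simp add: algebra_simps)
    moreover have "1 - rD/(rD+rE) = rE/(rD+rE)" using pos by (simp add: field_simps)
    ultimately show ?thesis by simp
  qed
  then have "dist p b = rE/(rD+rE) * dist a b" unfolding dist_norm using pos
    by simp
  also have "\<dots> < rE/(rD+rE) * (rD + rE)"
    using H pos unfolding a_def b_def rD_def rE_def by (intro mult_strict_left_mono) auto
  finally have p2: "p \<in> ball b rE" using pos by (simp add: mem_ball dist_commute)
  have "ball a rD \<inter> ball b rE = {}" using assms unfolding packing_def a_def b_def rD_def rE_def by auto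
  then show False using p1 p2 by auto
qed

lemma ball_hit:
  assumes "packing P" "D \<in> P" "A \<in> P" "D \<noteq> A"
    and "dist p (center D) < radius D" "dist p (center A) \<le> radius A"
  shows False
proof -
  have "dist (center D) (center A) \<le> dist p (center D) + dist p (center A)"
    by (metis dist_commute dist_triangle)
  then show False using sep[OF assms(1-4)] assms(5,6) by linarith
qed

lemma seg_cover:
  assumes "tangent A B" "p \<in> closed_segment (center A) (center B)"
  shows "dist p (center A) \<le> radius A \<or> dist p (center B) \<le> radius B"
  using seg_dist[OF assms(2)] assms(1) unfolding tangent_def by (auto simp: dist_commute)

lemma seg_hit:
  assumes "packing P" "D \<in> P" "A \<in> P" "B \<in> P" "D \<noteq> A" "D \<noteq> B" "tangent A B"
    "p \<in> closed_segment (center A) (center B)" "dist p (center D) < radius D"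
  shows False
  using seg_cover[OF assms(7,8)] ball_hit[OF assms(1,2,3,5,9)] ball_hit[OF assms(1,2,4,6,9)] by blast

lemma noncol:
  assumes "packing P" "A \<in> P" "B \<in> P" "C \<in> P" "tangent A B" "tangent B C" "tangent A C"
  shows "\<not> collinear {center A, center B, center C}"
proof
  assume "collinear {center A, center B, center C}"
  then have c: "between (center B, center C) (center A) \<or> between (center C, center A) (center B) \<or>
      between (center A, center B) (center C)" by (simp add: collinear_between_cases)
  have pos: "radius A > 0" "radius B > 0" "radius C > 0" using assms unfolding packing_def by auto
  have d: "dist (center A) (center B) = radius A + radius B" "dist (center B) (center C) = radius B + radius C"
    "dist (center A) (center C) = radius A + radius C" using assms unfolding tangent_def by auto
  show False using c d pos by (auto simp: between dist_commute)
qed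

lemma cross_id: "of_real (cross u v) * w = of_real (cross w v) * u + of_real (cross u w) * v"
  unfolding cross_def by (simp add: complex_eq_iff algebra_simps)

lemma cross_lin: "cross u (of_real a * v + of_real b * x) = a * cross u v + b * cross u x"
  unfolding cross_def by (simp add: algebra_simps)

lemma cross_lin2: "cross (of_real a * v + of_real b * x) u = a * cross v u + b * cross x u"
  unfolding cross_def by (simp add: algebra_simps)

lemma cross_self[simp]: "cross u u = 0"
  unfolding cross_def by (simp add: algebra_simps)

lemma cross_anti: "cross u v = - cross v u"
  unfolding cross_def by (simp add: algebra_simps)

lemma center_in_drawing: "D \<in> P \<Longrightarrow> center D \<in> contact_drawing P"
  unfolding contact_drawing_def by auto

lemma seg_in_drawing: "D \<in> P \<Longrightarrow> E \<in> P \<Longrightarrow> tangent D E \<Longrightarrow> q \<in> closed_segment (center D) (center E) \<Longrightarrow>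
  q \<in> contact_drawing P"
  unfolding contact_drawing_def by blast

lemma cone_empty:
  assumes "packing P" "D \<in> P" "E \<in> P" "F \<in> P" "tangent D E" "tangent D F" "tangent E F"
    and emp: "interior (convex hull {center D, center E, center F}) \<inter> contact_drawing P = {}"
    and G: "G \<in> P" "tangent D G"
    and k: "cross (center E - center D) (center F - center D) > 0"
    and c1: "cross (center E - center D) (center G - center D) > 0"
    and c2: "cross (center G - center D) (center F - center D) > 0"
  shows False
proof -
  define c where "c = center D"
  define u where "u = center E - c"
  define v where "v = center F - c"
  define x where "x = center G - c"
  define \<kappa> where "\<kappa> = cross u v"
  define \<alpha> where "\<alpha> = cross x v / \<kappa>"
  define \<beta> where "\<beta> = cross u x / \<kappa>"
  have kp: "\<kappa> > 0" using k unfolding \<kappa>_def u_def v_def c_def .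
  have ab: "\<alpha> > 0" "\<beta> > 0" using kp c1 c2 unfolding \<alpha>_def \<beta>_def u_def v_def x_def c_def by auto
  have xe: "x = of_real \<alpha> * u + of_real \<beta> * v"
  proof -
    have "of_real \<kappa> * x = of_real (cross x v) * u + of_real (cross u x) * v"
      using cross_id[of u v x] unfolding \<kappa>_def by simp
    then have "x = (of_real (cross x v) * u + of_real (cross u x) * v) / of_real \<kappa>"
      using kp by (simp add: field_simps)
    then show ?thesis unfolding \<alpha>_def \<beta>_def by (simp add: field_simps add_divide_distrib)
  qed
  define \<delta> where "\<delta> = 1 / (2 * (1 + \<alpha> + \<beta>))"
  have dp: "\<delta> > 0" "\<delta> \<le> 1" using ab unfolding \<delta>_def by (auto simp: field_simps)
  have sm: "\<delta> * \<alpha> + \<delta> * \<beta> < 1"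
  proof -
    have "\<delta> * (\<alpha> + \<beta>) < \<delta> * (2 * (1 + \<alpha> + \<beta>))" using dp ab by (intro mult_strict_left_mono) auto
    also have "\<dots> = 1" unfolding \<delta>_def using ab by simp
    finally show ?thesis by (simp add: algebra_simps)
  qed
  define q where "q = c + of_real \<delta> * x"
  have nc: "\<not> collinear {center D, center E, center F}"
    using noncol[OF assms(1,2,3,4,5,7,6)] .
  have "q \<in> interior (convex hull {center D, center E, center F})"
    unfolding interior_convex_hull_3_minimal[OF nc DIM_complex]
  proof (intro CollectI exI conjI)
    show "0 < 1 - \<delta> * \<alpha> - \<delta> * \<beta>" using sm by simp
    show "0 < \<delta> * \<alpha>" "0 < \<delta> * \<beta>" using dp ab by auto
    show "1 - \<delta> * \<alpha> - \<delta> * \<beta> + \<delta> * \<alpha> + \<delta> * \<beta> = 1" by simp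
    show "(1 - \<delta> * \<alpha> - \<delta> * \<beta>) *\<^sub>R center D + (\<delta> * \<alpha>) *\<^sub>R center E + (\<delta> * \<beta>) *\<^sub>R center F = q"
      unfolding q_def xe u_def v_def c_def by (simp add: scaleR_conv_of_real algebra_simps)
  qed
  moreover have "q \<in> closed_segment (center D) (center G)"
    unfolding closed_segment_def
  proof (intro CollectI exI conjI)
    show "0 \<le> \<delta>" "\<delta> \<le> 1" using dp by auto
    show "q = (1 - \<delta>) *\<^sub>R center D + \<delta> *\<^sub>R center G"
      unfolding q_def x_def c_def by (simp add: scaleR_conv_of_real algebra_simps)
  qed
  then have "q \<in> contact_drawing P" using seg_in_drawing[OF assms(2) G] by blast
  ultimately show False using emp by blast
qed

lemma face_D:
  assumes "packing P" "D \<in> P" "dist z (center D) < radius D"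
    and f: "face_triangle P A B C" "z \<in> convex hull {center A, center B, center C}"
  shows "D \<in> {A, B, C}"
proof (rule ccontr)
  assume nD: "D \<notin> {A, B, C}"
  define T where "T = convex hull {center A, center B, center C}"
  define S where "S = ball (center D) (radius D)"
  have ABC: "A \<in> P" "B \<in> P" "C \<in> P" "tangent A B" "tangent B C" "tangent A C"
    and emp: "interior T \<inter> contact_drawing P = {}"
    using f unfolding face_triangle_def T_def by auto
  have cnot: "center D \<notin> interior T" using emp center_in_drawing[OF assms(2)] by blast
  have "S \<inter> T \<noteq> {}" using f(2) assms(3) unfolding S_def T_def by (auto simp: dist_commute)
  moreover have "S - T \<noteq> {}"
  proof
    assume "S - T = {}"
    then have "S \<subseteq> T" by auto
    then have "S \<subseteq> interior T" unfolding S_def by (intro interior_maximal) auto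
    moreover have "center D \<in> S" unfolding S_def using assms(1,2) unfolding packing_def by auto
    ultimately show False using cnot by auto
  qed
  ultimately have "S \<inter> frontier T \<noteq> {}"
    using connected_Int_frontier[of S T] unfolding S_def by auto
  then obtain p where p: "p \<in> S" "p \<in> frontier T" by auto
  have clT: "closed T" unfolding T_def by (intro compact_imp_closed compact_convex_hull) auto
  have pT: "p \<in> T" "p \<notin> interior T" using p(2) clT unfolding frontier_def by auto
  obtain u v w where uvw: "0 \<le> u" "0 \<le> v" "0 \<le> w" "u + v + w = 1"
    "p = u *\<^sub>R center A + v *\<^sub>R center B + w *\<^sub>R center C"
    using pT(1) unfolding T_def convex_hull_3 by auto
  have nc: "\<not> collinear {center A, center B, center C}" using noncol[OF assms(1) ABC] .
  have "\<not> (0 < u \<and> 0 < v \<and> 0 < w)"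
    using pT(2) uvw unfolding T_def interior_convex_hull_3_minimal[OF nc DIM_complex] by blast
  then have "u = 0 \<or> v = 0 \<or> w = 0" using uvw by auto
  moreover have pS: "dist p (center D) < radius D" using p(1) unfolding S_def by (simp add: dist_commute)
  moreover have nD': "D \<noteq> A" "D \<noteq> B" "D \<noteq> C" using nD by auto
  moreover
  { assume "u = 0"
    then have "p \<in> closed_segment (center B) (center C)"
      unfolding closed_segment_def using uvw by (intro CollectI exI[of _ w]) auto
    then have False using seg_hit[OF assms(1,2) ABC(2,3) nD'(2,3) ABC(5) _ pS] by blast }
  moreover
  { assume "v = 0"
    then have "p \<in> closed_segment (center A) (center C)"
      unfolding closed_segment_def using uvw by (intro CollectI exI[of _ w]) auto
    then have False using seg_hit[OF assms(1,2) ABC(1,3) nD'(1,3) ABC(6) _ pS] by blast }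
  moreover
  { assume "w = 0"
    then have "p \<in> closed_segment (center A) (center B)"
      unfolding closed_segment_def using uvw by (intro CollectI exI[of _ v]) auto
    then have False using seg_hit[OF assms(1,2) ABC(1,2) nD'(1,2) ABC(4) _ pS] by blast }
  ultimately show False by blast
qed

lemma cross_scal: "cross u (of_real a * v) = a * cross u v" "cross (of_real a * v) u = a * cross v u"
  unfolding cross_def by (simp_all add: algebra_simps)

lemma cross_zero_par:
  assumes "cross u v = 0" "u \<noteq> 0"
  shows "v = ((Re u * Re v + Im u * Im v) / ((Re u)^2 + (Im u)^2)) *\<^sub>R u"
proof -
  have N: "(Re u)^2 + (Im u)^2 > 0" using assms(2)
    by (metis complex_eq_iff sum_power2_gt_zero_iff zero_complex.sel)
  have c: "Re u * Im v = Im u * Re v" using assms(1) unfolding cross_def by (simp add: algebra_simps)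
  have "Re v * ((Re u)^2 + (Im u)^2) = (Re u * Re v + Im u * Im v) * Re u"
    using c by algebra
  moreover have "Im v * ((Re u)^2 + (Im u)^2) = (Re u * Re v + Im u * Im v) * Im u"
    using c by algebra
  ultimately show ?thesis using N by (auto simp: complex_eq_iff eq_divide_eq)
qed

lemma GL_core:
  assumes pk: "packing P" and D: "D \<in> P" and EF: "E \<in> P" "F \<in> P" "tangent D E" "tangent D F" "tangent E F"
    and emp: "interior (convex hull {center D, center E, center F}) \<inter> contact_drawing P = {}"
    and k: "cross (center E - center D) (center F - center D) > 0"
    and pos: "\<epsilon> > 0" "y > 0" "t > 0"
    and key: "of_real \<epsilon> * w = of_real y * (center E - center D) + of_real t * (center F - center D)"
  shows "cross (center E - center D) w > 0 \<and> cross w (center F - center D) > 0 \<and>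
    (\<forall>G\<in>corona P D. \<not> (cross (center E - center D) (center G - center D) > 0 \<and>
         cross (center G - center D) (center F - center D) > 0))"
proof (intro conjI ballI)
  have "\<epsilon> * cross (center E - center D) w = t * cross (center E - center D) (center F - center D)"
    using arg_cong[OF key, of "cross (center E - center D)"] by (simp add: cross_scal cross_lin)
  then show "cross (center E - center D) w > 0" using pos k
    by (metis mult_pos_pos zero_less_mult_pos)
  have "\<epsilon> * cross w (center F - center D) = y * cross (center E - center D) (center F - center D)"
    using arg_cong[OF key, of "\<lambda>x. cross x (center F - center D)"] by (simp add: cross_scal cross_lin2)
  then show "cross w (center F - center D) > 0" using pos k
    by (metis mult_pos_pos zero_less_mult_pos)
  fix G assume "G \<in> corona P D"
  then have G: "G \<in> P" "tangent D G" unfolding corona_def by auto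
  show "\<not> (cross (center E - center D) (center G - center D) > 0 \<and>
         cross (center G - center D) (center F - center D) > 0)"
    using cone_empty[OF pk D EF emp G k] by blast
qed

lemma GL:
  assumes cp: "compact_packing P" and D: "D \<in> P" and w: "w \<noteq> 0"
    and nd: "\<forall>G\<in>corona P D. \<forall>l>0. w \<noteq> of_real l * (center G - center D)"
  shows "\<exists>E\<in>corona P D. \<exists>F\<in>corona P D. tangent E F \<and>
    cross (center E - center D) (center F - center D) > 0 \<and>
    cross (center E - center D) w > 0 \<and> cross w (center F - center D) > 0 \<and>
    (\<forall>G\<in>corona P D. \<not> (cross (center E - center D) (center G - center D) > 0 \<and>
         cross (center G - center D) (center F - center D) > 0))"
proof -
  have pk: "packing P" using cp unfolding compact_packing_def by auto
  have rho: "radius D > 0" using pk D unfolding packing_def by auto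
  define \<epsilon> where "\<epsilon> = radius D / (2 * cmod w)"
  have ep: "\<epsilon> > 0" using rho w unfolding \<epsilon>_def by auto
  define z where "z = center D + of_real \<epsilon> * w"
  have "dist z (center D) = \<epsilon> * cmod w" unfolding z_def dist_norm using ep by (simp add: norm_mult)
  also have "\<dots> = radius D / 2" unfolding \<epsilon>_def using w by simp
  finally have zd: "dist z (center D) < radius D" using rho by simp
  obtain A B C where f: "face_triangle P A B C" "z \<in> convex hull {center A, center B, center C}"
    using cp unfolding compact_packing_def by blast
  have DABC: "D \<in> {A, B, C}" using face_D[OF pk D zd f] .
  have fa: "A \<in> P" "B \<in> P" "C \<in> P" "tangent A B" "tangent B C" "tangent A C"
    and emp0: "interior (convex hull {center A, center B, center C}) \<inter> contact_drawing P = {}"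
    using f(1) unfolding face_triangle_def by auto
  obtain E F where EF: "E \<in> P" "F \<in> P" "tangent D E" "tangent D F" "tangent E F"
    and eqs: "{center A, center B, center C} = {center D, center E, center F}"
  proof -
    { assume "D = A" then have ?thesis using that[of B C] fa by auto }
    moreover
    { assume "D = B" then have ?thesis using that[of A C] fa tangent_sym[of A B] by (auto simp: insert_commute) }
    moreover
    { assume "D = C" then have ?thesis using that[of A B] fa tangent_sym[of A C] tangent_sym[of B C]
        by (auto simp: insert_commute) }
    ultimately show ?thesis using DABC by blast
  qed
  have emp: "interior (convex hull {center D, center E, center F}) \<inter> contact_drawing P = {}"
    using emp0 eqs by simp
  have zT: "z \<in> convex hull {center D, center E, center F}" using f(2) eqs by simp
  obtain x y t where xyt: "0 \<le> x" "0 \<le> y" "0 \<le> t" "x + y + t = 1"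
    "z = x *\<^sub>R center D + y *\<^sub>R center E + t *\<^sub>R center F"
    using zT unfolding convex_hull_3 by auto
  have key: "of_real \<epsilon> * w = of_real y * (center E - center D) + of_real t * (center F - center D)"
  proof -
    have hx: "x = 1 - y - t" using xyt by simp
    show ?thesis using xyt(5)[unfolded hx] unfolding z_def by (simp add: scaleR_conv_of_real algebra_simps)
  qed
  have ED: "E \<in> corona P D" "F \<in> corona P D" using EF unfolding corona_def by auto
  have y: "y > 0"
  proof (rule ccontr)
    assume "\<not> y > 0" then have "y = 0" using xyt by auto
    then have k2: "of_real \<epsilon> * w = of_real t * (center F - center D)" using key by simp
    have "t \<noteq> 0" using k2 ep w by auto
    then have "t > 0" using xyt by auto
    moreover have "w = of_real (t / \<epsilon>) * (center F - center D)" using k2 ep by (simp add: field_simps)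
    moreover have "w \<noteq> of_real (t / \<epsilon>) * (center F - center D)"
      using nd ED(2) divide_pos_pos[OF \<open>t > 0\<close> ep] by blast
    ultimately show False by blast
  qed
  have t: "t > 0"
  proof (rule ccontr)
    assume "\<not> t > 0" then have "t = 0" using xyt by auto
    then have k2: "of_real \<epsilon> * w = of_real y * (center E - center D)" using key by simp
    have "w = of_real (y / \<epsilon>) * (center E - center D)" using k2 ep by (simp add: field_simps)
    moreover have "w \<noteq> of_real (y / \<epsilon>) * (center E - center D)"
      using nd ED(1) divide_pos_pos[OF y ep] by blast
    ultimately show False by blast
  qed
  have nc: "\<not> collinear {center D, center E, center F}" using noncol[OF pk D EF(1,2,3,5,4)] .
  have kne: "cross (center E - center D) (center F - center D) \<noteq> 0"
  proof
    assume k0: "cross (center E - center D) (center F - center D) = 0"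
    have "center E \<noteq> center D" proof
      assume "center E = center D"
      moreover have "radius D > 0" "radius E > 0" using pk D EF(1) unfolding packing_def by auto
      ultimately show False using EF(3) unfolding tangent_def by simp
    qed
    then have "center E - center D \<noteq> 0" by auto
    from cross_zero_par[OF k0 this] have "collinear {0, center E - center D, center F - center D}"
      unfolding collinear_lemma by blast
    then have "collinear {center E, center D, center F}" using collinear_3[of "center E" "center D" "center F"] by simp
    then show False using nc by (simp add: insert_commute)
  qed
  show ?thesis
  proof (cases "cross (center E - center D) (center F - center D) > 0")
    case True
    note C = GL_core[OF pk D EF emp True ep y t key]
    show ?thesis
    proof (rule bexI[of _ E], rule bexI[of _ F])
      show "tangent E F \<and> cross (center E - center D) (center F - center D) > 0 \<and> cross (center E - center D) w > 0 \<and> cross w (center F - center D) > 0 \<and>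
    (\<forall>G\<in>corona P D. \<not> (cross (center E - center D) (center G - center D) > 0 \<and>
         cross (center G - center D) (center F - center D) > 0))"
        using C EF(5) True by (intro conjI EF(5) True C[THEN conjunct1] C[THEN conjunct2, THEN conjunct1] C[THEN conjunct2, THEN conjunct2])
    qed (use ED in auto)
  next
    case False
    then have k: "cross (center F - center D) (center E - center D) > 0" using kne cross_anti[of "center F - center D" "center E - center D"] by linarith
    have emp': "interior (convex hull {center D, center F, center E}) \<inter> contact_drawing P = {}"
      using emp by (simp add: insert_commute)
    have key': "of_real \<epsilon> * w = of_real t * (center F - center D) + of_real y * (center E - center D)"
      using key by simp
    have FE: "tangent F E" using EF(5) tangent_sym by blast
    note C = GL_core[OF pk D EF(2,1,4,3) FE emp' k ep t y key']
    show ?thesis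
    proof (rule bexI[of _ F], rule bexI[of _ E])
      show "tangent F E \<and> cross (center F - center D) (center E - center D) > 0 \<and> cross (center F - center D) w > 0 \<and> cross w (center E - center D) > 0 \<and>
    (\<forall>G\<in>corona P D. \<not> (cross (center F - center D) (center G - center D) > 0 \<and>
         cross (center G - center D) (center E - center D) > 0))"
        by (intro conjI FE k C[THEN conjunct1] C[THEN conjunct2, THEN conjunct1] C[THEN conjunct2, THEN conjunct2])
    qed (use ED in auto)
  qed
qed




definition Hc :: "char \<Rightarrow> char \<Rightarrow> nat" where
  "Hc x y = (if x = CHR ''s'' \<and> y = CHR ''s'' then 2 else if x = CHR ''s'' \<or> y = CHR ''s'' then 3 else 6)"

definition feasible :: "string \<Rightarrow> bool" where
  "feasible w = (let n = length w; S = (\<Sum>i<n. Hc (w!i) (w!((i+1) mod n))) in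
     (list_all (\<lambda>c. c = CHR ''s'') w \<and> n = 6) \<or> (\<not> list_all (\<lambda>c. c = CHR ''s'') w \<and> n < 6 \<and> 12 < S))"

definition okw :: "string \<Rightarrow> bool" where
  "okw w = list_ex (\<lambda>k. list_ex (\<lambda>v. rotate k w = v \<or> rotate k (rev w) = v) s_corona_words) [0..<length w]"

fun allw :: "nat \<Rightarrow> string list" where
  "allw 0 = [[]]"
| "allw (Suc n) = concat (map (\<lambda>c. map (Cons c) (allw n)) ''1rs'')"

lemma allw_complete: "length w = n \<Longrightarrow> set w \<subseteq> {CHR ''1'', CHR ''r'', CHR ''s''} \<Longrightarrow> w \<in> set (allw n)"
  by (induction n arbitrary: w) (auto simp: length_Suc_conv)

lemma chk0: "list_all (\<lambda>w. feasible w \<longrightarrow> okw w) (allw 0)" by code_simp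
lemma chk1: "list_all (\<lambda>w. feasible w \<longrightarrow> okw w) (allw 1)" by code_simp
lemma chk2: "list_all (\<lambda>w. feasible w \<longrightarrow> okw w) (allw 2)" by code_simp
lemma chk3: "list_all (\<lambda>w. feasible w \<longrightarrow> okw w) (allw 3)" by code_simp
lemma chk4: "list_all (\<lambda>w. feasible w \<longrightarrow> okw w) (allw 4)" by code_simp
lemma chk5: "list_all (\<lambda>w. feasible w \<longrightarrow> okw w) (allw 5)" by code_simp




lemma okw6: "okw (replicate 6 (CHR ''s''))" by code_simp

lemma comb:
  assumes f: "feasible w" and st: "set w \<subseteq> {CHR ''1'', CHR ''r'', CHR ''s''}"
  shows "okw w"
proof -
  have "(list_all (\<lambda>c. c = CHR ''s'') w \<and> length w = 6) \<or> (\<not> list_all (\<lambda>c. c = CHR ''s'') w \<and> length w < 6 \<and> 12 < (\<Sum>i<length w. Hc (w!i) (w!((i+1) mod length w))))"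
    using f unfolding feasible_def Let_def .
  then consider "list_all (\<lambda>c. c = CHR ''s'') w \<and> length w = 6" | "length w < 6" by blast
  then show ?thesis
  proof cases
    case 1
    then have "\<forall>x\<in>set w. x = CHR ''s''" unfolding list_all_iff by (elim conjE)
    then have "replicate (length w) (CHR ''s'') = w" by (rule replicate_length_same)
    then have "w = replicate 6 (CHR ''s'')" using 1 by simp
    then show ?thesis using okw6 by simp
  next
    case 2
    have gen: "\<And>m. list_all (\<lambda>w. feasible w \<longrightarrow> okw w) (allw m) \<Longrightarrow> w \<in> set (allw m) \<Longrightarrow> okw w"
      unfolding list_all_iff using f by blast
    have m6: "\<And>m::nat. m < 6 \<Longrightarrow> m \<in> {0,1,2,3,4,5}" by auto
    have "length w \<in> {0,1,2,3,4,5}" using m6[OF 2] .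
    moreover have "w \<in> set (allw (length w))" using allw_complete[OF refl st] .
    ultimately show ?thesis using gen chk0 chk1 chk2 chk3 chk4 chk5 by (elim insertE emptyE) (simp_all only:)
  qed
qed



lemma cross_rcis: "cross (rcis m a) (rcis n b) = m * n * sin (b - a)"
  unfolding cross_def by (simp add: sin_diff algebra_simps)

lemma dot_rcis: "Re (cnj (rcis m a) * rcis n b) = m * n * cos (b - a)"
  by (simp add: cos_diff algebra_simps)

lemma norm_diff_sq: "(cmod (u - v))^2 = (cmod u)^2 + (cmod v)^2 - 2 * Re (cnj u * v)"
  unfolding cmod_power2 by (simp add: power2_eq_square algebra_simps)

lemma cis_eq_int: "cis a = cis b \<Longrightarrow> \<exists>n::int. b = a + 2*pi * of_int n"
proof -
  assume h: "cis a = cis b"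
  then have "cos a = cos b" "sin a = sin b" by (simp_all add: complex_eq_iff)
  then have "cos (b - a) = cos a * cos a + sin a * sin a" by (simp add: cos_diff)
  then have "cos (b - a) = 1" by (simp add: sin_cos_squared_add3)
  then obtain n :: int where "b - a = of_int n * 2 * pi" using cos_one_2pi_int by blast
  then show ?thesis by (intro exI[of _ n]) (simp add: algebra_simps)
qed

lemma gap_bounds:
  fixes r s e f g :: real
  assumes "0 < s" "s < r" "r < 1" "e \<in> {1, r, s}" "f \<in> {1, r, s}" "0 < g" "g < pi"
    and cg: "cos g = ((s+e)^2 + (s+f)^2 - (e+f)^2) / (2*(s+e)*(s+f))"
  shows "(e = s \<and> f = s \<longrightarrow> g = pi/3) \<and> (\<not> (e = s \<and> f = s) \<longrightarrow> pi/3 < g) \<and>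
         (e = s \<or> f = s \<longrightarrow> g < pi/2)"
proof -
  have ef: "s \<le> e" "s \<le> f" "0 < e" "0 < f" using assms(1-5) by auto
  define X where "X = (s+e)*(s+f)"
  have X: "X > 0" using ef assms(1) unfolding X_def by auto
  have Q: "cos g = 1 - 2*e*f/X"
  proof -
    have "(s+e)^2 + (s+f)^2 - (e+f)^2 = 2*X - 4*e*f" unfolding X_def by (simp add: power2_eq_square algebra_simps)
    moreover have "2*(s+e)*(s+f) = 2*X" unfolding X_def by simp
    ultimately have "cos g = (2*X - 4*e*f) / (2*X)" using cg by simp
    also have "\<dots> = 1 - 2*e*f/X" using X by (simp add: diff_divide_distrib)
    finally show ?thesis .
  qed
  have A: "e = s \<and> f = s \<longrightarrow> g = pi/3"
  proof
    assume "e = s \<and> f = s"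
    then have es: "e = s" "f = s" by auto
    have "X = 4 * (s * s)" unfolding X_def es by simp
    then have h: "2*e*f/X = 1/2" unfolding es using assms(1) by simp
    have "cos g = 1 - 1/2" using Q unfolding h .
    then have "cos g = cos (pi/3)" by (simp add: cos_60)
    then show "g = pi/3" using assms(6,7) cos_inj_pi[of g "pi/3"] by simp
  qed
  have B: "\<not> (e = s \<and> f = s) \<longrightarrow> pi/3 < g"
  proof
    assume ns: "\<not> (e = s \<and> f = s)"
    have le: "s + e \<le> 2*e" "s + f \<le> 2*f" using ef by auto
    have pos: "0 < s + e" "0 < s + f" using ef assms(1) by auto
    have "s + e < 2*e \<or> s + f < 2*f" using ns ef by auto
    then have "X < (2*e)*(2*f)"
    proof
      assume h: "s + e < 2*e"
      have "(s+e)*(s+f) < (2*e)*(2*f)" by (rule mult_less_le_imp_less[OF h le(2)]) (use pos in auto)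
      then show ?thesis unfolding X_def .
    next
      assume h: "s + f < 2*f"
      have "(s+e)*(s+f) < (2*e)*(2*f)" by (rule mult_le_less_imp_less[OF le(1) h]) (use pos in auto)
      then show ?thesis unfolding X_def .
    qed
    then have "1/2 < 2*e*f/X" using X by (simp add: less_divide_eq)
    then have "cos g < 1/2" using Q by linarith
    then have "cos g < cos (pi/3)" by (simp add: cos_60)
    then show "pi/3 < g" using assms(6,7) cos_mono_less_eq[of g "pi/3"] by simp
  qed
  have C: "e = s \<or> f = s \<longrightarrow> g < pi/2"
  proof
    assume "e = s \<or> f = s"
    then have "2*e*f < X"
    proof
      assume es: "e = s"
      have "X = 2 * s * f + 2 * s * s" unfolding X_def es by (simp add: algebra_simps)
      then show ?thesis unfolding es using assms(1) by simp
    next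
      assume es: "f = s"
      have "X = 2 * s * e + 2 * s * s" unfolding X_def es by (simp add: algebra_simps)
      then show ?thesis unfolding es using assms(1) by simp
    qed
    then have "2*e*f/X < 1" using X by (simp add: divide_less_eq)
    then have "cos g > 0" using Q by linarith
    then have "cos g > cos (pi/2)" by simp
    then show "g < pi/2" using assms(6,7) cos_mono_less_eq[of "pi/2" g] by simp
  qed
  show ?thesis using A B C by blast
qed

lemma main_D:
  fixes r s :: real and P :: "disc set" and D :: disc
  assumes s0: "0 < s" and sr: "s < r" and r1: "r < 1" and cp: "compact_packing P"
    and rad: "\<forall>D\<in>P. radius D \<in> {1, r, s}" and D: "D \<in> P" and Ds: "radius D = s"
  shows "\<exists>L. corona_in_angular_order P D L \<and> (\<exists>w\<in>set s_corona_words. cyc_equiv (coding L) (word r s w))"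
proof -
  have pk: "packing P" using cp unfolding compact_packing_def by auto
  define c where "c = center D"
  define K where "K = corona P D"
  define V where "V G = center G - c" for G
  define \<alpha> where "\<alpha> G = Arg (V G)" for G
  define m where "m G = cmod (V G)" for G
  have KP: "G \<in> P" "tangent D G" if "G \<in> K" for G using that unfolding K_def corona_def by auto
  have radG: "radius G \<in> {1, r, s}" if "G \<in> P" for G using rad that by auto
  have radpos: "radius G \<ge> s" "radius G \<le> 1" if "G \<in> P" for G using radG[OF that] s0 sr r1 by auto
  have mG: "m G = s + radius G" if "G \<in> K" for G
    using KP[OF that] Ds unfolding m_def V_def c_def tangent_def by (simp add: dist_norm norm_minus_commute)
  have mpos: "m G > 0" if "G \<in> K" for G using mG[OF that] radpos[OF KP(1)[OF that]] s0 by simp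
  have Vrep: "V G = rcis (m G) (\<alpha> G)" for G unfolding m_def \<alpha>_def by (simp add: rcis_cmod_Arg)
  have arng: "-pi < \<alpha> G \<and> \<alpha> G \<le> pi" for G unfolding \<alpha>_def by (rule Arg_bounded)
  have crossV: "cross (V E) (V F) = m E * m F * sin (\<alpha> F - \<alpha> E)" for E F
    by (subst (1 2) Vrep) (rule cross_rcis)
  have dotV: "Re (cnj (V E) * V F) = m E * m F * cos (\<alpha> F - \<alpha> E)" for E F
    by (subst (1 2) Vrep) (rule dot_rcis)
  have inj: "inj_on \<alpha> K"
  proof (rule inj_onI, rule ccontr)
    fix E F assume E: "E \<in> K" and F: "F \<in> K" and eq: "\<alpha> E = \<alpha> F" and ne: "E \<noteq> F"
    have "V E - V F = rcis (m E - m F) (\<alpha> E)" using Vrep[of E] Vrep[of F] eq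
      by (simp add: rcis_def algebra_simps)
    then have "cmod (V E - V F) = \<bar>radius E - radius F\<bar>" using mG[OF E] mG[OF F] by simp
    moreover have "cmod (V E - V F) = dist (center E) (center F)" unfolding V_def dist_norm by simp
    moreover have "radius E + radius F \<le> dist (center E) (center F)" using sep[OF pk KP(1)[OF E] KP(1)[OF F] ne] .
    moreover have "radius E > 0" "radius F > 0" using radpos[OF KP(1)[OF E]] radpos[OF KP(1)[OF F]] s0 by auto
    ultimately show False by linarith
  qed
  have fin: "finite K"
  proof (rule ccontr)
    assume inf: "infinite K"
    have injc: "inj_on center K"
    proof (rule inj_onI, rule ccontr)
      fix E F assume E: "E \<in> K" and F: "F \<in> K" and eq: "center E = center F" and ne: "E \<noteq> F"
      have "radius E + radius F \<le> dist (center E) (center F)" using sep[OF pk KP(1)[OF E] KP(1)[OF F] ne] .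
      then show False using eq radpos[OF KP(1)[OF E]] radpos[OF KP(1)[OF F]] s0 by simp
    qed
    define S where "S = center ` K"
    have infS: "infinite S" using inf injc finite_imageD unfolding S_def by blast
    have "S \<subseteq> cball c (s + 1)"
    proof
      fix x assume "x \<in> S"
      then obtain G where G: "G \<in> K" "x = center G" unfolding S_def by auto
      have "dist c x = m G" using G unfolding m_def V_def dist_norm by (simp add: norm_minus_commute)
      then show "x \<in> cball c (s + 1)" using mG[OF G(1)] radpos[OF KP(1)[OF G(1)]] by simp
    qed
    then have "bounded S" using bounded_cball bounded_subset by blast
    then obtain x where "x islimpt S" using bounded_infinite_imp_islimpt[of S S] infS by blast
    then have "infinite (S \<inter> ball x s)" using s0 islimpt_eq_infinite_ball by blast
    then obtain y1 where y1: "y1 \<in> S \<inter> ball x s" by (metis ex_in_conv finite.emptyI)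
    have "infinite (S \<inter> ball x s - {y1})" using \<open>infinite (S \<inter> ball x s)\<close> by simp
    then obtain y2 where y2: "y2 \<in> S \<inter> ball x s - {y1}" by (metis ex_in_conv finite.emptyI)
    obtain G1 where G1: "G1 \<in> K" "y1 = center G1" using y1 unfolding S_def by auto
    obtain G2 where G2: "G2 \<in> K" "y2 = center G2" using y2 unfolding S_def by auto
    have ne: "G1 \<noteq> G2" using G1 G2 y2 by auto
    have "dist y1 y2 < 2 * s" using y1 y2 dist_triangle3[of y1 y2 x]
      by (auto simp: mem_ball)
    moreover have "radius G1 + radius G2 \<le> dist y1 y2" using sep[OF pk KP(1)[OF G1(1)] KP(1)[OF G2(1)] ne] G1 G2 by simp
    ultimately show False using radpos[OF KP(1)[OF G1(1)]] radpos[OF KP(1)[OF G2(1)]] by linarith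
  qed
  define Ls where "Ls = sorted_list_of_set (\<alpha> ` K)"
  define L where "L = map (the_inv_into K \<alpha>) Ls"
  have finA: "finite (\<alpha> ` K)" using fin by simp
  have setLs: "set Ls = \<alpha> ` K" unfolding Ls_def using finA by simp
  have setL: "set L = K" unfolding L_def using setLs inj by simp
  have distL: "distinct L" unfolding L_def
    using setLs inj_on_the_inv_into[OF inj] finA by (simp add: distinct_map Ls_def)
  have sortL: "sorted_wrt (\<lambda>E F. \<alpha> E < \<alpha> F) L"
  proof -
    have "sorted_wrt (<) Ls" unfolding Ls_def by (rule strict_sorted_list_of_set)
    then have "sorted_wrt (\<lambda>x y. \<alpha> (the_inv_into K \<alpha> x) < \<alpha> (the_inv_into K \<alpha> y)) Ls"
      by (rule sorted_wrt_mono_rel[rotated]) (simp add: setLs f_the_inv_into_f[OF inj])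
    then show ?thesis unfolding L_def by (simp add: sorted_wrt_map)
  qed
  have ord: "corona_in_angular_order P D L"
    unfolding corona_in_angular_order_def using distL setL sortL
    unfolding K_def \<alpha>_def V_def c_def by simp
  have crossc1: "cross (V E) (cis \<phi>) = m E * sin (\<phi> - \<alpha> E)" for E \<phi>
    using cross_rcis[of "m E" "\<alpha> E" 1 \<phi>] Vrep[of E] by (simp add: cis_rcis_eq)
  have crossc2: "cross (cis \<phi>) (V F) = m F * sin (\<alpha> F - \<phi>)" for F \<phi>
    using cross_rcis[of 1 \<phi> "m F" "\<alpha> F"] Vrep[of F] by (simp add: cis_rcis_eq)
  have GA: "\<exists>E\<in>K. \<exists>F\<in>K. tangent E F \<and> sin (\<alpha> F - \<alpha> E) > 0 \<and> sin (\<phi> - \<alpha> E) > 0 \<and> sin (\<alpha> F - \<phi>) > 0 \<and>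
        (\<forall>G\<in>K. \<not> (sin (\<alpha> G - \<alpha> E) > 0 \<and> sin (\<alpha> F - \<alpha> G) > 0))"
    if H: "\<forall>G\<in>K. \<forall>k::int. \<alpha> G \<noteq> \<phi> + 2*pi * of_int k" for \<phi>
  proof -
    have nd: "\<forall>G\<in>corona P D. \<forall>l>0. cis \<phi> \<noteq> of_real l * (center G - center D)"
    proof (intro ballI allI impI notI)
      fix G l assume G: "G \<in> corona P D" and l: "(l::real) > 0" and eq: "cis \<phi> = of_real l * (center G - center D)"
      have GK: "G \<in> K" using G K_def by simp
      have "cis \<phi> = rcis (l * m G) (\<alpha> G)" using eq Vrep[of G] unfolding V_def c_def
        by (simp add: rcis_def)
      moreover have "l * m G = 1"
      proof -
        have "cmod (cis \<phi>) = \<bar>l * m G\<bar>" using \<open>cis \<phi> = rcis (l * m G) (\<alpha> G)\<close> by simp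
        then show ?thesis using l mpos[OF GK] by simp
      qed
      ultimately have "cis \<phi> = cis (\<alpha> G)" by (simp add: cis_rcis_eq)
      then obtain k :: int where "\<alpha> G = \<phi> + 2*pi * of_int k" using cis_eq_int by blast
      then show False using H GK by blast
    qed
    have cne: "cis \<phi> \<noteq> 0" by simp
    obtain E F where E: "E \<in> corona P D" and F: "F \<in> corona P D" and EF: "tangent E F"
      and c1: "cross (center E - center D) (center F - center D) > 0"
      and c2: "cross (center E - center D) (cis \<phi>) > 0" and c3: "cross (cis \<phi>) (center F - center D) > 0"
      and c4: "\<forall>G\<in>corona P D. \<not> (cross (center E - center D) (center G - center D) > 0 \<and>
         cross (center G - center D) (center F - center D) > 0)"
      using GL[OF cp D cne nd] by blast
    have EK: "E \<in> K" "F \<in> K" using E F K_def by auto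
    have s1: "sin (\<alpha> F - \<alpha> E) > 0"
      using c1 crossV[of E F] mult_pos_pos[OF mpos[OF EK(1)] mpos[OF EK(2)]] unfolding V_def c_def
      by (auto simp: zero_less_mult_iff)
    have s2: "sin (\<phi> - \<alpha> E) > 0"
      using c2 crossc1[of E \<phi>] mpos[OF EK(1)] unfolding V_def c_def
      by (simp add: zero_less_mult_iff)
    have s3: "sin (\<alpha> F - \<phi>) > 0"
      using c3 crossc2[of \<phi> F] mpos[OF EK(2)] unfolding V_def c_def
      by (simp add: zero_less_mult_iff)
    have s4: "\<forall>G\<in>K. \<not> (sin (\<alpha> G - \<alpha> E) > 0 \<and> sin (\<alpha> F - \<alpha> G) > 0)"
    proof (intro ballI notI)
      fix G assume GK: "G \<in> K" and h: "sin (\<alpha> G - \<alpha> E) > 0 \<and> sin (\<alpha> F - \<alpha> G) > 0"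
      have "cross (V E) (V G) > 0" using h crossV[of E G] mpos[OF EK(1)] mpos[OF GK] by simp
      moreover have "cross (V G) (V F) > 0" using h crossV[of G F] mpos[OF EK(2)] mpos[OF GK] by simp
      ultimately show False using c4 GK unfolding K_def V_def c_def by blast
    qed
    show ?thesis using EK EF s1 s2 s3 s4 by blast
  qed
  define n where "n = length L"
  have npos: "n > 0"
  proof (rule ccontr)
    assume "\<not> n > 0"
    then have "K = {}" using setL n_def by auto
    then show False using GA[of 0] by auto
  qed
  define g where "g i = (if i + 1 < length L then \<alpha> (L!(i+1)) - \<alpha> (L!i) else \<alpha> (L!0) + 2*pi - \<alpha> (L!i))" for i
  have gapi: "tangent (L!i) (L!((i+1) mod n)) \<and> 0 < g i \<and> g i < pi" if i: "i < n" for i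
    using gap_lemma[of K \<alpha> L tangent i, OF arng inj setL sortL GA] i unfolding g_def n_def by blast
  have LK: "L!i \<in> K" if "i < n" for i using that setL n_def nth_mem by blast
  have LK1: "L!((i+1) mod n) \<in> K" if "i < n" for i using LK[of "(i+1) mod n"] npos by simp
  have cosg: "cos (g i) = ((s + radius (L!i))^2 + (s + radius (L!((i+1) mod n)))^2
       - (radius (L!i) + radius (L!((i+1) mod n)))^2) / (2 * (s + radius (L!i)) * (s + radius (L!((i+1) mod n))))"
    if i: "i < n" for i
  proof -
    define E where "E = L!i"
    define F where "F = L!((i+1) mod n)"
    have EK: "E \<in> K" "F \<in> K" using LK[OF i] LK1[OF i] unfolding E_def F_def by auto
    have c1: "cos (g i) = cos (\<alpha> F - \<alpha> E)"
    proof (cases "i + 1 < n")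
      case True
      then have "(i+1) mod n = i + 1" by simp
      then show ?thesis using True unfolding g_def E_def F_def n_def by simp
    next
      case False
      then have "i + 1 = n" using i by simp
      then have "(i+1) mod n = 0" by simp
      moreover have "g i = \<alpha> (L!0) - \<alpha> (L!i) + 2*pi" using False unfolding g_def n_def by simp
      ultimately show ?thesis unfolding E_def F_def by simp
    qed
    have tEF: "tangent E F" using gapi[OF i] unfolding E_def F_def by blast
    have dEF: "cmod (V E - V F) = radius E + radius F"
      using tEF unfolding tangent_def V_def dist_norm by simp
    have "m E * m F * cos (\<alpha> F - \<alpha> E) = ((m E)^2 + (m F)^2 - (cmod (V E - V F))^2) / 2"
      using dotV[of E F] norm_diff_sq[of "V E" "V F"] unfolding m_def by simp
    then have "cos (\<alpha> F - \<alpha> E) * (2 * m E * m F) = (m E)^2 + (m F)^2 - (cmod (V E - V F))^2"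
      by (simp add: algebra_simps)
    then have "cos (\<alpha> F - \<alpha> E) = ((m E)^2 + (m F)^2 - (cmod (V E - V F))^2) / (2 * m E * m F)"
      using mpos[OF EK(1)] mpos[OF EK(2)] by (simp add: eq_divide_eq)
    then have "cos (g i) = ((s + radius E)^2 + (s + radius F)^2 - (radius E + radius F)^2) / (2 * (s + radius E) * (s + radius F))"
      unfolding c1 dEF mG[OF EK(1)] mG[OF EK(2)] .
    then show ?thesis unfolding E_def F_def .
  qed
  define chr where "chr E = (if radius E = 1 then CHR ''1'' else if radius E = r then CHR ''r'' else CHR ''s'')" for E
  have letter_chr: "letter r s (chr E) = radius E" if "E \<in> P" for E
    using radG[OF that] sr r1 unfolding chr_def letter_def by auto
  have chr_s: "chr E = CHR ''s'' \<longleftrightarrow> radius E = s" if "E \<in> P" for E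
    using radG[OF that] sr r1 s0 unfolding chr_def by auto
  define w where "w = map chr L"
  have lw: "length w = n" unfolding w_def n_def by simp
  have wi: "w!i = chr (L!i)" if "i < n" for i using that unfolding w_def n_def by simp
  have setw: "set w \<subseteq> {CHR ''1'', CHR ''r'', CHR ''s''}" unfolding w_def chr_def by auto
  have codw: "coding L = word r s w"
  proof -
    have "\<forall>E\<in>set L. letter r s (chr E) = radius E" using letter_chr setL KP by blast
    then show ?thesis unfolding coding_def word_def w_def by simp
  qed
  define h where "h i = 6 * g i / pi" for i
  have hb: "(chr (L!i) = CHR ''s'' \<and> chr (L!((i+1) mod n)) = CHR ''s'' \<longrightarrow> h i = 2) \<and>
            (\<not> (chr (L!i) = CHR ''s'' \<and> chr (L!((i+1) mod n)) = CHR ''s'') \<longrightarrow> 2 < h i) \<and>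
            h i \<le> real (Hc (chr (L!i)) (chr (L!((i+1) mod n)))) \<and>
            (\<not> (chr (L!i) = CHR ''s'' \<and> chr (L!((i+1) mod n)) = CHR ''s'') \<longrightarrow>
               h i < real (Hc (chr (L!i)) (chr (L!((i+1) mod n)))))"
    if i: "i < n" for i
  proof -
    define e where "e = radius (L!i)"
    define f where "f = radius (L!((i+1) mod n))"
    have eP: "L!i \<in> P" "L!((i+1) mod n) \<in> P" using KP LK[OF i] LK1[OF i] by auto
    have gb: "(e = s \<and> f = s \<longrightarrow> g i = pi/3) \<and> (\<not> (e = s \<and> f = s) \<longrightarrow> pi/3 < g i) \<and>
         (e = s \<or> f = s \<longrightarrow> g i < pi/2)"
      using gap_bounds[OF s0 sr r1 radG[OF eP(1)] radG[OF eP(2)]] gapi[OF i] cosg[OF i]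
      unfolding e_def f_def by blast
    have gpi: "g i < pi" using gapi[OF i] by blast
    have cs: "chr (L!i) = CHR ''s'' \<longleftrightarrow> e = s" "chr (L!((i+1) mod n)) = CHR ''s'' \<longleftrightarrow> f = s"
      using chr_s eP unfolding e_def f_def by auto
    have h1: "h i = 2" if hg: "g i = pi/3" unfolding h_def hg by simp
    have h2: "pi/3 < g i \<Longrightarrow> 2 < h i" unfolding h_def by (simp add: field_simps)
    have h3: "g i < pi/2 \<Longrightarrow> h i < 3" unfolding h_def by (simp add: field_simps)
    have h4: "h i < 6" using gpi unfolding h_def by (simp add: field_simps)
    show ?thesis unfolding cs Hc_def using gb h1 h2 h3 h4 by auto
  qed
  have sumg: "(\<Sum>i<n. g i) = 2 * pi"
  proof -
    obtain k where k: "n = Suc k" using npos by (cases n) auto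
    have "(\<Sum>i<n. g i) = (\<Sum>i<k. g i) + g k" unfolding k by simp
    also have "(\<Sum>i<k. g i) = (\<Sum>i<k. \<alpha> (L!(Suc i)) - \<alpha> (L!i))"
      by (rule sum.cong) (auto simp: g_def k n_def[symmetric])
    also have "\<dots> = \<alpha> (L!k) - \<alpha> (L!0)" by (rule sum_lessThan_telescope)
    also have "g k = \<alpha> (L!0) + 2*pi - \<alpha> (L!k)" unfolding g_def using k n_def by simp
    finally show ?thesis by simp
  qed
  have sumh: "(\<Sum>i<n. h i) = 12"
  proof -
    have "(\<Sum>i<n. h i) = 6 / pi * (\<Sum>i<n. g i)" unfolding h_def by (simp add: sum_distrib_left)
    then show ?thesis using sumg by simp
  qed
  have feas: "feasible w"
  proof (cases "list_all (\<lambda>c. c = CHR ''s'') w")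
    case True
    then have alls: "chr (L!i) = CHR ''s''" if "i < n" for i using that wi lw by (auto simp: list_all_length)
    have "h i = 2" if "i < n" for i using hb[OF that] alls[OF that] alls[of "(i+1) mod n"] npos by simp
    then have "(\<Sum>i<n. h i) = 2 * n" by simp
    then have "n = 6" using sumh by simp
    then show ?thesis unfolding feasible_def Let_def using True lw by simp
  next
    case False
    then obtain j where j: "j < n" "chr (L!j) \<noteq> CHR ''s''" using wi lw by (auto simp: list_all_length)
    have "(\<Sum>i<n. (2::real)) < (\<Sum>i<n. h i)"
    proof (rule sum_strict_mono_ex1)
      show "\<forall>i\<in>{..<n}. 2 \<le> h i" using hb by fastforce
      show "\<exists>i\<in>{..<n}. 2 < h i" using hb[OF j(1)] j by auto
    qed simp
    then have n6: "n < 6" using sumh by simp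
    have "(\<Sum>i<n. h i) < (\<Sum>i<n. real (Hc (chr (L!i)) (chr (L!((i+1) mod n)))))"
    proof (rule sum_strict_mono_ex1)
      show "\<forall>i\<in>{..<n}. h i \<le> real (Hc (chr (L!i)) (chr (L!((i+1) mod n))))" using hb by blast
      show "\<exists>i\<in>{..<n}. h i < real (Hc (chr (L!i)) (chr (L!((i+1) mod n))))" using hb[OF j(1)] j by auto
    qed simp
    then have "12 < real (\<Sum>i<n. Hc (chr (L!i)) (chr (L!((i+1) mod n))))" using sumh by simp
    then have "12 < (\<Sum>i<n. Hc (chr (L!i)) (chr (L!((i+1) mod n))))" by linarith
    moreover have "(\<Sum>i<n. Hc (w!i) (w!((i+1) mod n))) = (\<Sum>i<n. Hc (chr (L!i)) (chr (L!((i+1) mod n))))"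
      by (rule sum.cong) (auto simp: wi npos)
    ultimately show ?thesis unfolding feasible_def Let_def using False n6 lw by simp
  qed
  have "okw w" using comb[OF feas setw] .
  then obtain k v where v: "v \<in> set s_corona_words" "rotate k w = v \<or> rotate k (rev w) = v"
    unfolding okw_def list_ex_iff by auto
  have "cyc_equiv (coding L) (word r s v)"
    unfolding cyc_equiv_def codw word_def using v(2) by (auto simp: rotate_map rev_map)
  then show ?thesis using ord v(1) by blast
qed


theorem mainTheorem3:
  fixes r s :: real and P :: "disc set"
  assumes "0 < s" and "s < r" and "r < 1"
    and "compact_packing P"
    and "\<forall>D\<in>P. radius D \<in> {1, r, s}"
  shows "\<forall>D\<in>P. radius D = s \<longrightarrow>
           (\<exists>L. corona_in_angular_order P D L \<and>
                (\<exists>w\<in>set s_corona_words. cyc_equiv (coding L) (word r s w)))"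
  using main_D[OF assms] by blast

end
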